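(* Let $\lambda,\mu\in P^+$ (type $C_2$). Then $$|\mathcal S^{C}_{\lambda,\mu}|=|\mathcal S^{C}_{\lambda-\varpi_1,\mu-\varpi_1}|+|{}^{1}\mathcal S^{C}_{\lambda-\varpi_2,\mu-\varpi_2}|+|{}^{2}\mathcal S^{C}_{\lambda,\mu}|.$$ Moreover, if $\min\{m_2,n_2\}>0$ then $$|{}^{2}\mathcal S^{C}_{\lambda,\mu}|=|{}^{2}\mathcal S^{C}_{\lambda-\varpi_2,\mu-\varpi_2}|+\min\{2(m_1+m_2),2(n_1+n_2),m_1+n_1\}+1,$$ and if $\min\{m_2,n_2\}=0$ and $\min\{m_1,n_1\}>0$ then $$|{}^{2}\mathcal S^{C}_{\lambda,\mu}|=|{}^{2}\mathcal S^{C}_{\lambda-\varpi_1,\mu-\varpi_1}|+\min\{n_1,m_2\}+\min\{m_1,n_2\}+1.$$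
   Context: For integral weights $\lambda,\mu$ of type $C_2$ (fundamental weights $\varpi_1,\varpi_2$, $\alpha_1$ short) write $m_i=\lambda(h_i)$, $n_i=\mu(h_i)$ (arbitrary integers; sets are defined by the same inequalities for all integer values). $\mathcal S^{C}_{\lambda,\mu}=\{(a,b,c,d)\in\mathbb Z_+^4: a\le\min\{m_1,n_1\},\ d\le\min\{m_2,n_2\},\ a+b+c\le\min\{m_1+m_2,n_1+n_2\},\ a+b+d\le\min\{m_1+m_2,n_1+n_2\},\ 2a+b\le m_1+n_1,\ 2d+b\le m_2+n_2,\ 2a+b+2(c-d)\le m_1+n_1\}$. ${}^{1}\mathcal S^{C}_{\lambda,\mu}=\{(b,c,d)\in\mathbb Z_+^3: d\le\min\{m_2,n_2\},\ b+d\le\min\{m_1+m_2,n_1+n_2\},\ b+c\le\min\{m_1+m_2,n_1+n_2\},\ b\le m_1+n_1,\ 2d+b\le m_2+n_2,\ b+2c-2d\le m_1+n_1\}$. ${}^{2}\mathcal S^{C}_{\lambda,\mu}\subseteq\mathbb Z_+^3$ is the union of $\{(b,0,d): d\le\min\{m_2,n_2\},\ b+d\le\min\{m_1+m_2,n_1+n_2\},\ b\le m_1+n_1,\ 2d+b\le m_2+n_2\}$ and $\{(b,c,0): c\ge1,\ b+c\le\min\{m_1+m_2,n_1+n_2\},\ b\le m_2+n_2,\ b+2c\le m_1+n_1\}$. *)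

theory Defs
  imports Main
begin

text \<open>Weights of type C2 are encoded by their coordinates m_i = lambda(h_i)
  with respect to the fundamental weights (varpi_1 = (1,0), varpi_2 = (0,1)).\<close>

definition SC :: "int \<Rightarrow> int \<Rightarrow> int \<Rightarrow> int \<Rightarrow> (int \<times> int \<times> int \<times> int) set" where
  "SC m1 m2 n1 n2 = {(a,b,c,d). 0 \<le> a \<and> 0 \<le> b \<and> 0 \<le> c \<and> 0 \<le> d \<and>
     a \<le> min m1 n1 \<and> d \<le> min m2 n2 \<and>
     a + b + c \<le> min (m1 + m2) (n1 + n2) \<and> a + b + d \<le> min (m1 + m2) (n1 + n2) \<and>
     2*a + b \<le> m1 + n1 \<and> 2*d + b \<le> m2 + n2 \<and> 2*a + b + 2*(c - d) \<le> m1 + n1}"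

definition SC1 :: "int \<Rightarrow> int \<Rightarrow> int \<Rightarrow> int \<Rightarrow> (int \<times> int \<times> int) set" where
  "SC1 m1 m2 n1 n2 = {(b,c,d). 0 \<le> b \<and> 0 \<le> c \<and> 0 \<le> d \<and>
     d \<le> min m2 n2 \<and> b + d \<le> min (m1 + m2) (n1 + n2) \<and>
     b + c \<le> min (m1 + m2) (n1 + n2) \<and> b \<le> m1 + n1 \<and>
     2*d + b \<le> m2 + n2 \<and> b + 2*c - 2*d \<le> m1 + n1}"

definition SC2 :: "int \<Rightarrow> int \<Rightarrow> int \<Rightarrow> int \<Rightarrow> (int \<times> int \<times> int) set" where
  "SC2 m1 m2 n1 n2 =
     {(b,c,d). 0 \<le> b \<and> c = 0 \<and> 0 \<le> d \<and>
        d \<le> min m2 n2 \<and> b + d \<le> min (m1 + m2) (n1 + n2) \<and>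
        b \<le> m1 + n1 \<and> 2*d + b \<le> m2 + n2}
   \<union> {(b,c,d). 0 \<le> b \<and> 1 \<le> c \<and> d = 0 \<and>
        b + c \<le> min (m1 + m2) (n1 + n2) \<and> b \<le> m2 + n2 \<and> b + 2*c \<le> m1 + n1}"

end

theory Submission
  imports Defs
begin



lemma finSC: "finite (SC m1 m2 n1 n2)"
proof -
  let ?X = "\<bar>m1\<bar>+\<bar>m2\<bar>+\<bar>n1\<bar>+\<bar>n2\<bar>"
  have "SC m1 m2 n1 n2 \<subseteq> {0..?X} \<times> {0..?X} \<times> {0..?X} \<times> {0..?X}"
    by (auto simp: SC_def)
  then show ?thesis by (rule finite_subset) simp
qed

lemma finSC1: "finite (SC1 m1 m2 n1 n2)"
proof -
  let ?X = "\<bar>m1\<bar>+\<bar>m2\<bar>+\<bar>n1\<bar>+\<bar>n2\<bar>"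
  have "SC1 m1 m2 n1 n2 \<subseteq> {0..?X} \<times> {0..?X} \<times> {0..?X}"
    by (auto simp: SC1_def)
  then show ?thesis by (rule finite_subset) simp
qed

lemma finSC2: "finite (SC2 m1 m2 n1 n2)"
proof -
  let ?X = "\<bar>m1\<bar>+\<bar>m2\<bar>+\<bar>n1\<bar>+\<bar>n2\<bar>"
  have "SC2 m1 m2 n1 n2 \<subseteq> {0..?X} \<times> {0..?X} \<times> {0..?X}"
    by (auto simp: SC2_def)
  then show ?thesis by (rule finite_subset) simp
qed

lemma partA:
  fixes m1 m2 n1 n2 :: int
  assumes nn: "0 \<le> m1" "0 \<le> m2" "0 \<le> n1" "0 \<le> n2"
  shows "card (SC m1 m2 n1 n2) = card (SC (m1 - 1) m2 (n1 - 1) n2) + card (SC1 m1 (m2 - 1) n1 (n2 - 1))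
           + card (SC2 m1 m2 n1 n2)"
proof -
  define sh where "sh = (\<lambda>(a::int,b::int,c::int,d::int). (a+1,b,c,d))"
  define z where "z = (\<lambda>(b::int,c::int,d::int). (0::int,b,c,d))"
  define f where "f = (\<lambda>(b::int,c::int,d::int). (b,c+1,d+1))"
  have eq: "SC m1 m2 n1 n2 = sh ` SC (m1-1) m2 (n1-1) n2 \<union> z ` (f ` SC1 m1 (m2-1) n1 (n2-1) \<union> SC2 m1 m2 n1 n2)"
  proof (rule equalityI)
    show "SC m1 m2 n1 n2 \<subseteq> sh ` SC (m1-1) m2 (n1-1) n2 \<union> z ` (f ` SC1 m1 (m2-1) n1 (n2-1) \<union> SC2 m1 m2 n1 n2)"
    proof
      fix x assume x: "x \<in> SC m1 m2 n1 n2"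
      obtain a b c d where xe: "x = (a,b,c,d)" by (cases x)
      show "x \<in> sh ` SC (m1-1) m2 (n1-1) n2 \<union> z ` (f ` SC1 m1 (m2-1) n1 (n2-1) \<union> SC2 m1 m2 n1 n2)"
      proof (cases "a \<ge> 1")
        case True
        have "(a-1,b,c,d) \<in> SC (m1-1) m2 (n1-1) n2" using x xe True by (auto simp: SC_def)
        moreover have "x = sh (a-1,b,c,d)" using xe by (simp add: sh_def)
        ultimately show ?thesis by blast
      next
        case False
        then have a0: "a = 0" using x xe by (auto simp: SC_def)
        show ?thesis
        proof (cases "c \<ge> 1 \<and> d \<ge> 1")
          case True
          have "(b,c-1,d-1) \<in> SC1 m1 (m2-1) n1 (n2-1)" using x xe True a0 by (auto simp: SC_def SC1_def)
          moreover have "x = z (f (b,c-1,d-1))" using xe a0 by (simp add: z_def f_def)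
          ultimately show ?thesis by blast
        next
          case False
          have "(b,c,d) \<in> SC2 m1 m2 n1 n2" using x xe False a0 by (auto simp: SC_def SC2_def)
          moreover have "x = z (b,c,d)" using xe a0 by (simp add: z_def)
          ultimately show ?thesis by blast
        qed
      qed
    qed
    show "sh ` SC (m1-1) m2 (n1-1) n2 \<union> z ` (f ` SC1 m1 (m2-1) n1 (n2-1) \<union> SC2 m1 m2 n1 n2) \<subseteq> SC m1 m2 n1 n2"
      using nn by (auto simp: sh_def z_def f_def SC_def SC1_def SC2_def)
  qed
  have d1: "sh ` SC (m1-1) m2 (n1-1) n2 \<inter> z ` (f ` SC1 m1 (m2-1) n1 (n2-1) \<union> SC2 m1 m2 n1 n2) = {}"
    by (auto simp: sh_def z_def SC_def)
  have d2: "f ` SC1 m1 (m2-1) n1 (n2-1) \<inter> SC2 m1 m2 n1 n2 = {}"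
    by (auto simp: f_def SC1_def SC2_def)
  have i1: "inj_on sh X" for X by (auto simp: inj_on_def sh_def)
  have i2: "inj_on z X" for X by (auto simp: inj_on_def z_def)
  have i3: "inj_on f X" for X by (auto simp: inj_on_def f_def)
  show ?thesis
    apply (subst eq)
    apply (subst card_Un_disjoint)
       apply (simp_all add: finSC finSC1 finSC2 d1)
    apply (simp add: card_image i1 i2 i3)
    apply (subst card_Un_disjoint)
       apply (simp_all add: finSC finSC1 finSC2 d2 card_image i3)
    done
qed

lemma partB:
  fixes m1 m2 n1 n2 :: int
  assumes nn: "0 \<le> m1" "0 \<le> m2" "0 \<le> n1" "0 \<le> n2" and e: "min m2 n2 > 0"
  shows "int (card (SC2 m1 m2 n1 n2)) = int (card (SC2 m1 (m2 - 1) n1 (n2 - 1)))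
             + min (min (2*(m1 + m2)) (2*(n1 + n2))) (m1 + n1) + 1"
proof -
  define K where "K = min (min (2*(m1 + m2)) (2*(n1 + n2))) (m1 + n1)"
  define g where "g = (\<lambda>(b::int,c::int,d::int). if c = 0 then (b,0::int,d+1) else (b+2,c-1,0::int))"
  define k2 where "k2 = (\<lambda>k::int. (k mod 2, k div 2, 0::int))"
  have eq: "SC2 m1 m2 n1 n2 = g ` SC2 m1 (m2 - 1) n1 (n2 - 1) \<union> k2 ` {0..K}"
  proof (rule equalityI)
    show "SC2 m1 m2 n1 n2 \<subseteq> g ` SC2 m1 (m2 - 1) n1 (n2 - 1) \<union> k2 ` {0..K}"
    proof
      fix x assume x: "x \<in> SC2 m1 m2 n1 n2"
      obtain b c d where xe: "x = (b,c,d)" by (cases x)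
      show "x \<in> g ` SC2 m1 (m2 - 1) n1 (n2 - 1) \<union> k2 ` {0..K}"
      proof (cases "d \<ge> 1")
        case True
        then have c0: "c = 0" using x xe by (auto simp: SC2_def)
        have "(b,0,d-1) \<in> SC2 m1 (m2 - 1) n1 (n2 - 1)" using x xe True c0 by (auto simp: SC2_def)
        moreover have "x = g (b,0,d-1)" using xe c0 by (simp add: g_def)
        ultimately show ?thesis by blast
      next
        case False
        then have d0: "d = 0" using x xe by (auto simp: SC2_def)
        show ?thesis
        proof (cases "b \<ge> 2")
          case True
          have "(b-2,c+1,0) \<in> SC2 m1 (m2 - 1) n1 (n2 - 1)" using x xe True d0 by (auto simp: SC2_def)
          moreover have "x = g (b-2,c+1,0)" using xe d0 True x by (auto simp: g_def SC2_def)
          ultimately show ?thesis by blast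
        next
          case False
          have b01: "b = 0 \<or> b = 1" using x xe False by (auto simp: SC2_def)
          have "b + 2*c \<in> {0..K}" using x xe d0 b01 by (auto simp: SC2_def K_def)
          moreover have "x = k2 (b + 2*c)" using xe d0 b01 by (auto simp: k2_def)
          ultimately show ?thesis by blast
        qed
      qed
    qed
    have "k2 k \<in> SC2 m1 m2 n1 n2" if k: "k \<in> {0..K}" for k
    proof -
      define q where "q = k div 2"
      define r where "r = k mod 2"
      have kq: "k = 2*q + r" "r = 0 \<or> r = 1" unfolding q_def r_def by auto
      have "0 \<le> q" using k unfolding q_def by auto
      have "(r, q, 0) \<in> SC2 m1 m2 n1 n2" using kq \<open>0 \<le> q\<close> k nn e unfolding SC2_def K_def by auto
      then show ?thesis unfolding k2_def q_def r_def .
    qed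
    then have "k2 ` {0..K} \<subseteq> SC2 m1 m2 n1 n2" by blast
    moreover have "g ` SC2 m1 (m2 - 1) n1 (n2 - 1) \<subseteq> SC2 m1 m2 n1 n2"
      using nn by (auto simp: g_def SC2_def)
    ultimately show "g ` SC2 m1 (m2 - 1) n1 (n2 - 1) \<union> k2 ` {0..K} \<subseteq> SC2 m1 m2 n1 n2"
      by blast
  qed
  have d1: "g ` SC2 m1 (m2 - 1) n1 (n2 - 1) \<inter> k2 ` {0..K} = {}"
  proof -
    have "k2 k \<noteq> g y" if "y \<in> SC2 m1 (m2 - 1) n1 (n2 - 1)" for k y
    proof -
      have "0 \<le> k mod 2" "k mod 2 < 2" by auto
      then show ?thesis using that by (auto simp: g_def k2_def SC2_def split: prod.splits if_splits)
    qed
    then show ?thesis by (metis (no_types, lifting) disjoint_iff imageE)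
  qed
  have i1: "inj_on g (SC2 m1 (m2 - 1) n1 (n2 - 1))"
    by (auto simp: inj_on_def g_def SC2_def split: if_splits)
  have i2: "inj_on k2 X" for X
  proof (rule inj_onI)
    fix x y assume "k2 x = k2 y"
    then have "x mod 2 = y mod 2" "x div 2 = y div 2" by (auto simp: k2_def)
    then show "x = y" by (metis div_mod_decomp_int)
  qed
  have "card (SC2 m1 m2 n1 n2) = card (SC2 m1 (m2 - 1) n1 (n2 - 1)) + nat (K + 1)"
    apply (subst eq)
    apply (subst card_Un_disjoint)
       apply (simp_all add: finSC2 d1 card_image i1 i2)
    done
  moreover have "K \<ge> 0" using nn by (simp add: K_def)
  ultimately show ?thesis by (simp add: K_def)
qed

lemma partC:
  fixes m1 m2 n1 n2 :: int
  assumes nn: "0 \<le> m1" "0 \<le> m2" "0 \<le> n1" "0 \<le> n2" and e: "min m2 n2 = 0" and e1: "min m1 n1 > 0"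
  shows "int (card (SC2 m1 m2 n1 n2)) = int (card (SC2 (m1 - 1) m2 (n1 - 1) n2))
             + min n1 m2 + min m1 n2 + 1"
proof -
  define K where "K = min n1 m2 + min m1 n2"
  define g where "g = (\<lambda>(b::int,c::int,d::int). (b,c+1,d))"
  define k2 where "k2 = (\<lambda>k::int. (k, 0::int, 0::int))"
  have eq: "SC2 m1 m2 n1 n2 = g ` SC2 (m1 - 1) m2 (n1 - 1) n2 \<union> k2 ` {0..K}"
  proof (rule equalityI)
    show "SC2 m1 m2 n1 n2 \<subseteq> g ` SC2 (m1 - 1) m2 (n1 - 1) n2 \<union> k2 ` {0..K}"
    proof
      fix x assume x: "x \<in> SC2 m1 m2 n1 n2"
      obtain b c d where xe: "x = (b,c,d)" by (cases x)
      have d0: "d = 0" using x xe e by (auto simp: SC2_def)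
      show "x \<in> g ` SC2 (m1 - 1) m2 (n1 - 1) n2 \<union> k2 ` {0..K}"
      proof (cases "c \<ge> 1")
        case True
        have "(b,c-1,0) \<in> SC2 (m1 - 1) m2 (n1 - 1) n2" using x xe True d0 nn by (auto simp: SC2_def)
        moreover have "x = g (b,c-1,0)" using xe d0 by (simp add: g_def)
        ultimately show ?thesis by blast
      next
        case False
        then have c0: "c = 0" using x xe by (auto simp: SC2_def)
        have "b \<in> {0..K}" using x xe d0 c0 e nn by (auto simp: SC2_def K_def)
        moreover have "x = k2 b" using xe d0 c0 by (auto simp: k2_def)
        ultimately show ?thesis by blast
      qed
    qed
    show "g ` SC2 (m1 - 1) m2 (n1 - 1) n2 \<union> k2 ` {0..K} \<subseteq> SC2 m1 m2 n1 n2"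
      using nn e by (auto simp: g_def k2_def K_def SC2_def)
  qed
  have d1: "g ` SC2 (m1 - 1) m2 (n1 - 1) n2 \<inter> k2 ` {0..K} = {}"
    by (auto simp: g_def k2_def SC2_def)
  have i1: "inj_on g X" for X
    by (auto simp: inj_on_def g_def)
  have i2: "inj_on k2 X" for X
    by (auto simp: inj_on_def k2_def)
  have "card (SC2 m1 m2 n1 n2) = card (SC2 (m1 - 1) m2 (n1 - 1) n2) + nat (K + 1)"
    apply (subst eq)
    apply (subst card_Un_disjoint)
       apply (simp_all add: finSC2 d1 card_image i1 i2)
    done
  moreover have "K \<ge> 0" using nn by (simp add: K_def)
  ultimately show ?thesis by (simp add: K_def)
qed


theorem lemma5p3:
  fixes m1 m2 n1 n2 :: int
  assumes "0 \<le> m1" "0 \<le> m2" "0 \<le> n1" "0 \<le> n2"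
  shows "int (card (SC m1 m2 n1 n2)) =
           int (card (SC (m1 - 1) m2 (n1 - 1) n2)) + int (card (SC1 m1 (m2 - 1) n1 (n2 - 1)))
           + int (card (SC2 m1 m2 n1 n2))
       \<and> (min m2 n2 > 0 \<longrightarrow>
           int (card (SC2 m1 m2 n1 n2)) = int (card (SC2 m1 (m2 - 1) n1 (n2 - 1)))
             + min (min (2*(m1 + m2)) (2*(n1 + n2))) (m1 + n1) + 1)
       \<and> (min m2 n2 = 0 \<longrightarrow> min m1 n1 > 0 \<longrightarrow>
           int (card (SC2 m1 m2 n1 n2)) = int (card (SC2 (m1 - 1) m2 (n1 - 1) n2))
             + min n1 m2 + min m1 n2 + 1)"
  proof -
  have A: "card (SC m1 m2 n1 n2) = card (SC (m1 - 1) m2 (n1 - 1) n2) + card (SC1 m1 (m2 - 1) n1 (n2 - 1))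
           + card (SC2 m1 m2 n1 n2)" using partA assms by blast
  show ?thesis using A partB[OF assms] partC[OF assms] by simp
qed

end
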